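(* Let $\phi$ be a flow of a compact metric space $X$. (1) If $\phi$ is expansive on $X\setminus Sing(\phi)$, then $\phi$ is singular-expansive. (2) If $\phi$ is singular-expansive and $Sing(\phi)$ is open in $X$, then $\phi$ is expansive on $X\setminus Sing(\phi)$.
   Context: A flow is a continuous $\phi:\mathbb{R}\times X\to X$ with $\phi_0=\mathrm{id}$, $\phi_{t+s}=\phi_t\circ\phi_s$; $\phi_I(x)=\{\phi_t(x):t\in I\}$; $Sing(\phi)$ is the set of fixed points; $dist(z,A)=\inf_{a\in A}d(z,a)$, with $dist(z,\emptyset)=diam(X)$. $\phi$ is expansive on $\Lambda\subset X$ if for every $\epsilon>0$ there is $\delta>0$ such that whenever $x,y\in\Lambda$ and a continuous $s:\mathbb{R}\to\mathbb{R}$ with $s(0)=0$ satisfy $d(\phi_t(x),\phi_{s(t)}(y))\le\delta$ for all $t$, then $y\in\phi_{[-\epsilon,\epsilon]}(x)$. $\phi$ is singular-expansive if for every $\epsilon>0$ there is $\delta>0$ such that whenever $x,y\in X$ and an increasing homeomorphism $s:\mathbb{R}\to\mathbb{R}$ satisfy $d(\phi_t(x),\phi_{s(t)}(y))\le\delta\,dist(\phi_t(x),Sing(\phi))$ for all $t$, then $\phi_{s(t_0)}(y)\in\phi_{[t_0-\epsilon,t_0+\epsilon]}(x)$ for some $t_0\in\mathbb{R}$. *)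

theory Defs
  imports "HOL-Analysis.Analysis"
begin

text \<open>A flow on the whole space (the type 'a plays the role of X).\<close>
definition is_flow :: "(real \<Rightarrow> 'a::metric_space \<Rightarrow> 'a) \<Rightarrow> bool" where
  "is_flow \<phi> \<longleftrightarrow> continuous_on UNIV (\<lambda>(t, x). \<phi> t x)
     \<and> \<phi> 0 = id \<and> (\<forall>t s. \<phi> (t + s) = \<phi> t \<circ> \<phi> s)"

definition Sing :: "(real \<Rightarrow> 'a \<Rightarrow> 'a) \<Rightarrow> 'a set" where
  "Sing \<phi> = {x. \<forall>t. \<phi> t x = x}"

definition setdist_pt :: "'a::metric_space \<Rightarrow> 'a set \<Rightarrow> real" where
  "setdist_pt z A = (if A = {} then diameter (UNIV :: 'a set) else (INF a\<in>A. dist z a))"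

definition expansive_on :: "(real \<Rightarrow> 'a::metric_space \<Rightarrow> 'a) \<Rightarrow> 'a set \<Rightarrow> bool" where
  "expansive_on \<phi> \<Lambda> \<longleftrightarrow> (\<forall>\<epsilon>>0. \<exists>\<delta>>0. \<forall>x\<in>\<Lambda>. \<forall>y\<in>\<Lambda>. \<forall>s :: real \<Rightarrow> real.
     continuous_on UNIV s \<and> s 0 = 0 \<and> (\<forall>t. dist (\<phi> t x) (\<phi> (s t) y) \<le> \<delta>)
       \<longrightarrow> (\<exists>u\<in>{-\<epsilon>..\<epsilon>}. y = \<phi> u x))"

definition increasing_homeomorphism :: "(real \<Rightarrow> real) \<Rightarrow> bool" where
  "increasing_homeomorphism s \<longleftrightarrow> mono s \<and> (\<exists>g. homeomorphism UNIV UNIV s g)"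

definition singular_expansive :: "(real \<Rightarrow> 'a::metric_space \<Rightarrow> 'a) \<Rightarrow> bool" where
  "singular_expansive \<phi> \<longleftrightarrow> (\<forall>\<epsilon>>0. \<exists>\<delta>>0. \<forall>x y. \<forall>s :: real \<Rightarrow> real.
     increasing_homeomorphism s
     \<and> (\<forall>t. dist (\<phi> t x) (\<phi> (s t) y) \<le> \<delta> * setdist_pt (\<phi> t x) (Sing \<phi>))
       \<longrightarrow> (\<exists>t0. \<exists>u\<in>{t0-\<epsilon>..t0+\<epsilon>}. \<phi> (s t0) y = \<phi> u x))"

end

theory Submission
  imports Defs
begin


lemma flow_comp: assumes "is_flow \<phi>" shows "\<phi> a (\<phi> b z) = \<phi> (a+b) z"
  using assms unfolding is_flow_def by (metis comp_apply)

lemma flow_zero[simp]: assumes "is_flow \<phi>" shows "\<phi> 0 z = z"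
  using assms unfolding is_flow_def by simp

lemma flow_cont2: assumes "is_flow \<phi>" shows "continuous_on UNIV (\<lambda>p. \<phi> (fst p) (snd p))"
  using assms unfolding is_flow_def by (simp add: case_prod_beta')

lemma flow_cont_t: assumes "is_flow \<phi>" shows "continuous_on UNIV (\<lambda>t. \<phi> t z)"
proof -
  have "continuous_on UNIV ((\<lambda>p. \<phi> (fst p) (snd p)) \<circ> (\<lambda>t. (t, z)))"
    by (rule continuous_on_compose[OF _ continuous_on_subset[OF flow_cont2[OF assms]]])
      (auto intro!: continuous_intros)
  thus ?thesis by (simp add: o_def)
qed

lemma flow_cont_x: assumes "is_flow \<phi>" shows "continuous_on UNIV (\<phi> t)"
proof -
  have "continuous_on UNIV ((\<lambda>p. \<phi> (fst p) (snd p)) \<circ> (\<lambda>x. (t, x)))"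
    by (rule continuous_on_compose[OF _ continuous_on_subset[OF flow_cont2[OF assms]]])
      (auto intro!: continuous_intros)
  thus ?thesis by (simp add: o_def)
qed

lemma Sing_closed: assumes "is_flow \<phi>" shows "closed (Sing \<phi>)"
proof -
  have "Sing \<phi> = (\<Inter>t. {x. \<phi> t x = x})" unfolding Sing_def by auto
  moreover have "closed {x. \<phi> t x = x}" for t
    by (rule closed_Collect_eq) (auto intro!: continuous_intros flow_cont_x[OF assms])
  ultimately show ?thesis by auto
qed

lemma Sing_inv: assumes "is_flow \<phi>" shows "\<phi> t z \<in> Sing \<phi> \<longleftrightarrow> z \<in> Sing \<phi>"
proof
  assume h: "\<phi> t z \<in> Sing \<phi>"
  have "z = \<phi> (-t) (\<phi> t z)" using flow_comp[OF assms] assms by simp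
  also have "\<dots> = \<phi> t z" using h unfolding Sing_def by auto
  finally have zz: "z = \<phi> t z" .
  show "z \<in> Sing \<phi>" using h unfolding Sing_def by (metis zz)
next
  assume "z \<in> Sing \<phi>" thus "\<phi> t z \<in> Sing \<phi>" unfolding Sing_def by auto
qed

lemma setdist_pt_alt: fixes z :: "'a::metric_space" shows "setdist_pt z A = (if A = {} then diameter (UNIV::'a::metric_space set) else infdist z A)"
  unfolding setdist_pt_def infdist_def by simp

lemma part1:
  fixes \<phi> :: "real \<Rightarrow> 'a::metric_space \<Rightarrow> 'a"
  assumes cpt: "compact (UNIV :: 'a set)" and fl: "is_flow \<phi>"
    and ex: "expansive_on \<phi> (UNIV - Sing \<phi>)"
  shows "singular_expansive \<phi>"
  unfolding singular_expansive_def
proof (intro allI impI)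
  fix \<epsilon> :: real assume "\<epsilon> > 0"
  then obtain \<delta>0 where d0: "\<delta>0 > 0" and
    H0: "\<forall>x\<in>UNIV - Sing \<phi>. \<forall>y\<in>UNIV - Sing \<phi>. \<forall>s :: real \<Rightarrow> real.
     continuous_on UNIV s \<and> s 0 = 0 \<and> (\<forall>t. dist (\<phi> t x) (\<phi> (s t) y) \<le> \<delta>0)
       \<longrightarrow> (\<exists>u\<in>{-\<epsilon>..\<epsilon>}. y = \<phi> u x)"
    using ex unfolding expansive_on_def by blast
  have H: "\<And>x y s. x \<in> UNIV - Sing \<phi> \<Longrightarrow> y \<in> UNIV - Sing \<phi> \<Longrightarrow> continuous_on UNIV s \<Longrightarrow> s 0 = 0 \<Longrightarrow>
        (\<forall>t. dist (\<phi> t x) (\<phi> (s t) y) \<le> \<delta>0) \<Longrightarrow> (\<exists>u\<in>{-\<epsilon>..\<epsilon>}. y = \<phi> u x)"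
    using H0 by blast
  define D where "D = diameter (UNIV :: 'a set)"
  have bnd: "bounded (UNIV::'a set)" using cpt compact_imp_bounded by blast
  have Dge: "dist a b \<le> D" for a b :: 'a unfolding D_def by (rule diameter_bounded_bound[OF bnd]) auto
  have D0: "D \<ge> 0" using Dge[of undefined undefined] by simp
  have sd_le: "setdist_pt z (Sing \<phi>) \<le> D" for z
  proof (cases "Sing \<phi> = {}")
    case False then obtain a where "a \<in> Sing \<phi>" by auto
    then show ?thesis using infdist_le[of a "Sing \<phi>" z] Dge[of z a] False
      by (simp add: setdist_pt_alt del: infdist_le)
  qed (simp add: setdist_pt_alt D_def)
  define \<delta> where "\<delta> = min (1/2) (\<delta>0 / (D+1))"
  have dpos: "\<delta> > 0" unfolding \<delta>_def using d0 D0 by auto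
  show "\<exists>\<delta>>0. \<forall>x y s. increasing_homeomorphism s \<and>
        (\<forall>t. dist (\<phi> t x) (\<phi> (s t) y) \<le> \<delta> * setdist_pt (\<phi> t x) (Sing \<phi>)) \<longrightarrow>
        (\<exists>t0. \<exists>u\<in>{t0 - \<epsilon>..t0 + \<epsilon>}. \<phi> (s t0) y = \<phi> u x)"
  proof (rule exI[of _ \<delta>], intro conjI dpos allI impI, elim conjE)
    fix x y and s :: "real \<Rightarrow> real"
    assume ih: "increasing_homeomorphism s"
      and tr: "\<forall>t. dist (\<phi> t x) (\<phi> (s t) y) \<le> \<delta> * setdist_pt (\<phi> t x) (Sing \<phi>)"
    show "\<exists>t0. \<exists>u\<in>{t0 - \<epsilon>..t0 + \<epsilon>}. \<phi> (s t0) y = \<phi> u x"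
    proof (cases "x \<in> Sing \<phi>")
      case True
      hence "setdist_pt x (Sing \<phi>) = 0" by (auto simp: setdist_pt_alt)
      with tr[rule_format, of 0] dpos have "\<phi> (s 0) y = x" using fl by simp
      thus ?thesis using \<open>\<epsilon> > 0\<close> fl by (intro exI[of _ 0] bexI[of _ 0]) auto
    next
      case xS: False
      define y' where "y' = \<phi> (s 0) y"
      have y'S: "y' \<notin> Sing \<phi>"
      proof
        assume yin: "y' \<in> Sing \<phi>"
        have "dist x y' \<le> \<delta> * setdist_pt x (Sing \<phi>)" using tr[rule_format, of 0] fl
          by (simp add: y'_def)
        also have "\<dots> \<le> \<delta> * dist x y'"
        proof -
          have ne: "Sing \<phi> \<noteq> {}" using yin by blast
          have "setdist_pt x (Sing \<phi>) = infdist x (Sing \<phi>)" using ne by (simp add: setdist_pt_alt)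
          also have "\<dots> \<le> dist x y'" by (rule infdist_le[OF yin])
          finally show ?thesis using dpos by (intro mult_left_mono) auto
        qed
        finally have le: "dist x y' \<le> \<delta> * dist x y'" .
        have "\<delta> \<le> 1/2" unfolding \<delta>_def by (rule min.cobounded1)
        hence "(1 - \<delta>) * dist x y' \<le> 0" using le by (simp add: algebra_simps)
        moreover have "1 - \<delta> > 0" using \<open>\<delta> \<le> 1/2\<close> by simp
        ultimately have "dist x y' = 0" by (smt (verit) zero_le_dist mult_pos_pos)
        thus False using xS yin by simp
      qed
      have cs: "continuous_on UNIV s" using ih unfolding increasing_homeomorphism_def homeomorphism_def by auto
      have "\<exists>u\<in>{-\<epsilon>..\<epsilon>}. y' = \<phi> u x"
      proof (rule H[of x y' "\<lambda>t. s t - s 0"])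
        show "continuous_on UNIV (\<lambda>t. s t - s 0)" by (intro continuous_intros cs)
        show "\<forall>t. dist (\<phi> t x) (\<phi> (s t - s 0) y') \<le> \<delta>0"
        proof
          fix t
          have "\<phi> (s t - s 0) y' = \<phi> (s t) y" unfolding y'_def using flow_comp[OF fl] by simp
          hence "dist (\<phi> t x) (\<phi> (s t - s 0) y') \<le> \<delta> * D"
            using tr[rule_format, of t] sd_le[of "\<phi> t x"] dpos
            by (smt (verit) mult_left_mono)
          also have "\<dots> \<le> \<delta>0 / (D+1) * D" using D0 unfolding \<delta>_def by (intro mult_right_mono) auto
          also have "\<dots> \<le> \<delta>0" using D0 d0 by (simp add: field_simps)
          finally show "dist (\<phi> t x) (\<phi> (s t - s 0) y') \<le> \<delta>0" .
        qed
      qed (use xS y'S in auto)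
      then obtain u where "u \<in> {-\<epsilon>..\<epsilon>}" "y' = \<phi> u x" by blast
      thus ?thesis by (intro exI[of _ 0] bexI[of _ u]) (auto simp: y'_def)
    qed
  qed
qed

lemma flow_uc:
  fixes \<phi> :: "real \<Rightarrow> 'a::metric_space \<Rightarrow> 'a"
  assumes cpt: "compact (UNIV :: 'a set)" and fl: "is_flow \<phi>" and e: "e > 0"
  shows "\<exists>d>0. \<forall>r1 r2 a b. r1 \<in> {-T..T} \<longrightarrow> r2 \<in> {-T..T} \<longrightarrow> \<bar>r1 - r2\<bar> < d \<longrightarrow> dist a b < d
     \<longrightarrow> dist (\<phi> r1 a) (\<phi> r2 b) < e"
proof -
  let ?K = "{-T..T} \<times> (UNIV :: 'a set)"
  have uc: "uniformly_continuous_on ?K (\<lambda>p. \<phi> (fst p) (snd p))"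
    by (rule compact_uniformly_continuous[OF continuous_on_subset[OF flow_cont2[OF fl]]])
       (auto intro!: compact_Times cpt)
  from uc[unfolded uniformly_continuous_on_def, rule_format, OF e]
  obtain d where d: "d > 0" and
    H0: "\<forall>p\<in>?K. \<forall>q\<in>?K. dist q p < d \<longrightarrow> dist (\<phi> (fst q) (snd q)) (\<phi> (fst p) (snd p)) < e"
    by (elim exE conjE)
  have H: "\<And>p q. p \<in> ?K \<Longrightarrow> q \<in> ?K \<Longrightarrow> dist q p < d \<Longrightarrow> dist (\<phi> (fst q) (snd q)) (\<phi> (fst p) (snd p)) < e"
    using H0 by blast
  show ?thesis
  proof (intro exI[of _ "d/2"] conjI allI impI)
    fix r1 r2 :: real and a b :: 'a assume r: "r1 \<in> {-T..T}" "r2 \<in> {-T..T}" "\<bar>r1 - r2\<bar> < d/2" "dist a b < d/2"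
    have "dist (r1, a) (r2, b) \<le> \<bar>dist r1 r2\<bar> + \<bar>dist a b\<bar>"
      using sqrt_sum_squares_le_sum_abs[of "dist r1 r2" "dist a b"] by (simp add: dist_prod_def)
    also have "\<dots> < d" using r by (simp add: dist_real_def)
    finally have "dist (r1, a) (r2, b) < d" .
    from H[of "(r2,b)" "(r1,a)"] this r show "dist (\<phi> r1 a) (\<phi> r2 b) < e" by auto
  qed (use d in auto)
qed


lemma flow_period_int:
  assumes fl: "is_flow \<phi>" and p: "\<phi> p w = w"
  shows "\<phi> (of_int k * p) w = w"
proof -
  have nat: "\<phi> (real n * q) w = w" if "\<phi> q w = w" for n q
  proof (induction n)
    case (Suc n)
    have "\<phi> (real (Suc n) * q) w = \<phi> q (\<phi> (real n * q) w)"
      using flow_comp[OF fl] by (simp add: algebra_simps)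
    thus ?case using Suc that by simp
  qed (use fl in simp)
  have mp: "\<phi> (-p) w = w"
  proof -
    have "\<phi> (-p) w = \<phi> (-p) (\<phi> p w)" using p by simp
    thus ?thesis using flow_comp[OF fl] fl by simp
  qed
  show ?thesis
  proof (cases "k \<ge> 0")
    case True hence "k = int (nat k)" by simp
    thus ?thesis using nat[OF p, of "nat k"] by (metis of_int_of_nat_eq)
  next
    case False hence "k = - int (nat (-k))" by simp
    hence "of_int k * p = real (nat (-k)) * (-p)" by (metis mult_minus_left mult_minus_right of_int_minus of_int_of_nat_eq)
    thus ?thesis using nat[OF mp, of "nat (-k)"] by simp
  qed
qed



lemma flow_no_period:
  fixes \<phi> :: "real \<Rightarrow> 'a::metric_space \<Rightarrow> 'a"
  assumes cpt: "compact (UNIV :: 'a set)" and fl: "is_flow \<phi>" and op: "open (Sing \<phi>)" and c: "c > 0"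
  shows "\<exists>b>0. b \<le> c \<and> (\<forall>w. w \<notin> Sing \<phi> \<longrightarrow> \<phi> b w \<noteq> w)"
proof (rule ccontr)
  assume "\<not> ?thesis"
  hence A: "\<And>b. 0 < b \<Longrightarrow> b \<le> c \<Longrightarrow> \<exists>w. w \<notin> Sing \<phi> \<and> \<phi> b w = w" by auto
  define F where "F n = {w. w \<notin> Sing \<phi> \<and> \<phi> (c / 2^n) w = w}" for n :: nat
  have Fne: "F n \<noteq> {}" for n
  proof -
    have "c / 2^n \<le> c / 1" by (rule divide_left_mono) (use c in auto)
    moreover have "0 < c / 2^n" using c by simp
    ultimately obtain w where "w \<notin> Sing \<phi>" "\<phi> (c/2^n) w = w" using A[of "c/2^n"] by auto
    thus ?thesis unfolding F_def by blast
  qed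
  have Fsuc: "F (Suc n) \<subseteq> F n" for n
  proof
    fix w assume "w \<in> F (Suc n)"
    hence w: "w \<notin> Sing \<phi>" "\<phi> (c / 2^Suc n) w = w" unfolding F_def by auto
    have "\<phi> (c/2^n) w = \<phi> (c / 2^Suc n) (\<phi> (c / 2^Suc n) w)"
      using flow_comp[OF fl] by simp
    thus "w \<in> F n" using w unfolding F_def by simp
  qed
  have Fmono: "F (n + k) \<subseteq> F n" for n k
  proof (induction k)
    case (Suc k) thus ?case using Fsuc[of "n+k"] by simp
  qed simp
  have Fle: "F m \<subseteq> F n" if "n \<le> m" for n m using Fmono[of n "m-n"] that by simp
  have Fcl: "closed (F n)" for n
  proof -
    have "F n = - Sing \<phi> \<inter> {w. \<phi> (c / 2^n) w = w}" unfolding F_def by auto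
    moreover have "closed {w. \<phi> (c / 2^n) w = w}"
      by (rule closed_Collect_eq) (auto intro!: continuous_intros flow_cont_x[OF fl])
    ultimately show ?thesis using op by auto
  qed
  have "UNIV \<inter> \<Inter>(range F) \<noteq> {}"
  proof -
    have c1: "\<forall>a\<in>range F. closed a" using Fcl by auto
    have c2: "\<forall>B \<subseteq> range F. finite B \<longrightarrow> UNIV \<inter> \<Inter>B \<noteq> {}"
    proof (intro allI impI)
    fix B assume B: "B \<subseteq> range F" "finite B"
    show "UNIV \<inter> \<Inter>B \<noteq> {}"
    proof (cases "B = {}")
      case False
      obtain N where N: "B = F ` N" "finite N" using B by (meson finite_subset_image)
      have "N \<noteq> {}" using N False by auto
      have "F (Max N) \<subseteq> F n" if "n \<in> N" for n using Fle Max_ge[OF N(2) that] by blast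
      hence "F (Max N) \<subseteq> \<Inter>B" unfolding N(1) by blast
      thus ?thesis using Fne[of "Max N"] by auto
    qed simp
    qed
    have fip: "(\<forall>a\<in>range F. closed a) \<longrightarrow> (\<forall>B\<subseteq>range F. finite B \<longrightarrow> UNIV \<inter> \<Inter>B \<noteq> {}) \<longrightarrow> UNIV \<inter> \<Inter>(range F) \<noteq> {}"
      using cpt unfolding compact_fip by (rule spec)
    show ?thesis using mp[OF mp[OF fip c1] c2] .
  qed
  then obtain w where w: "\<And>n. w \<in> F n" by auto
  hence wS: "w \<notin> Sing \<phi>" and wp: "\<And>n. \<phi> (c / 2^n) w = w" unfolding F_def by auto
  have "\<phi> t w = w" for t
  proof -
    let ?P = "{t. \<phi> t w = w}"
    have clP: "closed ?P"
      by (rule closed_Collect_eq) (auto intro!: continuous_intros flow_cont_t[OF fl])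
    have "t \<in> closure ?P" unfolding closure_approachable
    proof (intro allI impI)
      fix e :: real assume e: "e > 0"
      obtain n where n: "c / e < 2^n" using real_arch_pow[of 2 "c/e"] by auto
      define p where "p = c / 2^n"
      have p0: "p > 0" using c by (simp add: p_def)
      have pe: "p < e" using n e c by (simp add: p_def field_simps)
      define k where "k = \<lfloor>t / p\<rfloor>"
      have l: "of_int k * p \<le> t" using floor_divide_lower[OF p0] k_def by simp
      have u: "t < (of_int k + 1) * p" using floor_divide_upper[OF p0] k_def by simp
      have "of_int k * p \<in> ?P" using flow_period_int[OF fl wp[of n]] p_def by simp
      moreover have "dist (of_int k * p) t < e" using l u pe by (simp add: dist_real_def algebra_simps)
      ultimately show "\<exists>y\<in>?P. dist y t < e" by blast
    qed
    thus ?thesis using clP closure_closed by auto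
  qed
  hence "w \<in> Sing \<phi>" unfolding Sing_def by auto
  thus False using wS by simp
qed


lemma flow_eta:
  fixes \<phi> :: "real \<Rightarrow> 'a::metric_space \<Rightarrow> 'a"
  assumes cpt: "compact (UNIV :: 'a set)" and fl: "is_flow \<phi>" and op: "open (Sing \<phi>)"
    and nb: "\<forall>w. w \<notin> Sing \<phi> \<longrightarrow> \<phi> b w \<noteq> w"
  shows "\<exists>\<eta>>0. \<forall>w. w \<notin> Sing \<phi> \<longrightarrow> \<eta> \<le> dist w (\<phi> b w) \<and> \<eta> \<le> dist w (\<phi> (-b) w)"
proof (cases "- Sing \<phi> = {}")
  case True thus ?thesis by (intro exI[of _ 1]) auto
next
  case False
  have cY: "compact (- Sing \<phi>)" using cpt op by (simp add: compact_Int_closed[of UNIV, simplified] closed_Compl)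
  have "continuous_on (- Sing \<phi>) (\<lambda>w. dist w (\<phi> b w))"
    by (intro continuous_intros continuous_on_subset[OF flow_cont_x[OF fl]]) auto
  from continuous_attains_inf[OF cY False this] obtain w0 where
    w0: "w0 \<notin> Sing \<phi>" "\<And>w. w \<notin> Sing \<phi> \<Longrightarrow> dist w0 (\<phi> b w0) \<le> dist w (\<phi> b w)" by auto
  have pos: "dist w0 (\<phi> b w0) > 0" using nb w0(1) by (metis dist_commute zero_less_dist_iff)
  show ?thesis
  proof (intro exI[of _ "dist w0 (\<phi> b w0)"] conjI allI impI pos)
    fix w assume wS: "w \<notin> Sing \<phi>"
    show "dist w0 (\<phi> b w0) \<le> dist w (\<phi> b w)" using w0(2)[OF wS] .
    define w' where "w' = \<phi> (-b) w"
    have w'S: "w' \<notin> Sing \<phi>" using wS Sing_inv[OF fl] w'_def by blast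
    have "\<phi> b w' = w" using flow_comp[OF fl] fl by (simp add: w'_def)
    hence "dist w (\<phi> (-b) w) = dist w' (\<phi> b w')" by (simp add: w'_def dist_commute)
    thus "dist w0 (\<phi> b w0) \<le> dist w (\<phi> (-b) w)" using w0(2)[OF w'S] by simp
  qed
qed

lemma barrier_fwd:
  assumes fl: "is_flow \<phi>" and b: "b > 0"
    and eta: "\<forall>w. w \<notin> Sing \<phi> \<longrightarrow> \<eta> \<le> dist w (\<phi> b w) \<and> \<eta> \<le> dist w (\<phi> (-b) w)"
    and z: "z \<notin> Sing \<phi>" and pq: "p \<le> q" and ch: "continuous_on {p..q} h"
    and tr: "\<forall>t\<in>{p..q}. dist (\<phi> t z) (\<phi> (t + h t) z) < \<eta>"
  shows "\<bar>h p\<bar> < b \<Longrightarrow> \<bar>h q\<bar> < b" and "\<bar>h q\<bar> < b \<Longrightarrow> \<bar>h p\<bar> < b"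
proof -
  have no: False if "x \<in> {p..q}" "h x = b \<or> h x = -b" for x
  proof -
    have wS: "\<phi> x z \<notin> Sing \<phi>" using z Sing_inv[OF fl] by blast
    have "\<phi> (x + h x) z = \<phi> (h x) (\<phi> x z)" using flow_comp[OF fl] by (simp add: add.commute)
    thus False using eta[rule_format, OF wS] tr[rule_format, OF that(1)] that(2) by auto
  qed
  show "\<bar>h q\<bar> < b" if "\<bar>h p\<bar> < b"
  proof (rule ccontr)
    assume "\<not> \<bar>h q\<bar> < b"
    hence "h q \<ge> b \<or> h q \<le> -b" by auto
    thus False
    proof
      assume "h q \<ge> b"
      have "\<exists>x. p \<le> x \<and> x \<le> q \<and> h x = b" by (rule IVT') (use that \<open>h q \<ge> b\<close> pq ch in auto)
      then obtain x where "p \<le> x" "x \<le> q" "h x = b" by auto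
      thus False using no by auto
    next
      assume "h q \<le> -b"
      have "\<exists>x. p \<le> x \<and> x \<le> q \<and> h x = -b" by (rule IVT2') (use that \<open>h q \<le> -b\<close> pq ch in auto)
      then obtain x where "p \<le> x" "x \<le> q" "h x = -b" by auto
      thus False using no by auto
    qed
  qed
  show "\<bar>h p\<bar> < b" if "\<bar>h q\<bar> < b"
  proof (rule ccontr)
    assume "\<not> \<bar>h p\<bar> < b"
    hence "h p \<ge> b \<or> h p \<le> -b" by auto
    thus False
    proof
      assume "h p \<ge> b"
      have "\<exists>x. p \<le> x \<and> x \<le> q \<and> h x = b" by (rule IVT2') (use that \<open>h p \<ge> b\<close> pq ch in auto)
      then obtain x where "p \<le> x" "x \<le> q" "h x = b" by auto
      thus False using no by auto
    next
      assume "h p \<le> -b"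
      have "\<exists>x. p \<le> x \<and> x \<le> q \<and> h x = -b" by (rule IVT') (use that \<open>h p \<le> -b\<close> pq ch in auto)
      then obtain x where "p \<le> x" "x \<le> q" "h x = -b" by auto
      thus False using no by auto
    qed
  qed
qed

lemma flow_m:
  fixes \<phi> :: "real \<Rightarrow> 'a::metric_space \<Rightarrow> 'a"
  assumes cpt: "compact (UNIV :: 'a set)" and fl: "is_flow \<phi>" and op: "open (Sing \<phi>)"
    and ne: "- Sing \<phi> \<noteq> {}"
  shows "\<exists>m>0. \<forall>z. z \<notin> Sing \<phi> \<longrightarrow> m \<le> setdist_pt z (Sing \<phi>)"
proof (cases "Sing \<phi> = {}")
  case True
  obtain z where "z \<notin> Sing \<phi>" using ne by auto
  then obtain t where t: "\<phi> t z \<noteq> z" unfolding Sing_def by auto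
  have bnd: "bounded (UNIV::'a set)" using cpt compact_imp_bounded by blast
  have "0 < dist (\<phi> t z) z" using t by simp
  also have "\<dots> \<le> diameter (UNIV :: 'a set)" by (rule diameter_bounded_bound[OF bnd]) auto
  finally show ?thesis using True by (intro exI[of _ "diameter (UNIV :: 'a set)"]) (auto simp: setdist_pt_alt)
next
  case False
  have cY: "compact (- Sing \<phi>)" using cpt op by (simp add: compact_Int_closed[of UNIV, simplified] closed_Compl)
  have "continuous_on (- Sing \<phi>) (\<lambda>z. infdist z (Sing \<phi>))"
    by (intro continuous_at_imp_continuous_on ballI continuous_intros)
  from continuous_attains_inf[OF cY ne this] obtain z0 where
    z0: "z0 \<notin> Sing \<phi>" "\<And>z. z \<notin> Sing \<phi> \<Longrightarrow> infdist z0 (Sing \<phi>) \<le> infdist z (Sing \<phi>)" by auto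
  have "infdist z0 (Sing \<phi>) > 0" by (rule infdist_pos_not_in_closed[OF Sing_closed[OF fl] False z0(1)])
  thus ?thesis using z0 False by (intro exI[of _ "infdist z0 (Sing \<phi>)"]) (auto simp: setdist_pt_alt)
qed


definition pl :: "(int \<Rightarrow> real) \<Rightarrow> real \<Rightarrow> real \<Rightarrow> real" where
  "pl S \<tau> t = S \<lfloor>t/\<tau>\<rfloor> + (t/\<tau> - of_int \<lfloor>t/\<tau>\<rfloor>) * (S (\<lfloor>t/\<tau>\<rfloor>+1) - S \<lfloor>t/\<tau>\<rfloor>)"

lemma pl_at: assumes "\<tau> > 0" shows "pl S \<tau> (of_int k * \<tau>) = S k"
  using assms unfolding pl_def by simp

lemma pl_piece: assumes t: "\<tau> > 0" and "of_int k * \<tau> \<le> t" "t \<le> (of_int k + 1) * \<tau>"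
  shows "pl S \<tau> t = S k + (t/\<tau> - of_int k) * (S (k+1) - S k)"
proof (cases "t = (of_int k + 1) * \<tau>")
  case True
  have "pl S \<tau> t = S (k+1)" using pl_at[OF t, of S "k+1"] True by simp
  thus ?thesis using True t by simp
next
  case False
  hence "t < (of_int k + 1) * \<tau>" using assms by simp
  hence "\<lfloor>t/\<tau>\<rfloor> = k" using assms by (simp add: floor_eq_iff field_simps)
  thus ?thesis unfolding pl_def by simp
qed

lemma pl_cont: assumes t: "\<tau> > 0" shows "continuous_on UNIV (pl S \<tau>)"
proof (intro continuous_at_imp_continuous_on ballI)
  fix x :: real
  define k where "k = \<lfloor>x/\<tau>\<rfloor>"
  have kl: "of_int k * \<tau> \<le> x" using floor_divide_lower[OF t] k_def by simp
  have ku: "x < (of_int k + 1) * \<tau>" using floor_divide_upper[OF t] k_def by simp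
  have piece: "continuous_on {of_int j * \<tau> .. (of_int j + 1) * \<tau>} (pl S \<tau>)" for j
  proof -
    have "continuous_on {of_int j * \<tau> .. (of_int j + 1) * \<tau>} (\<lambda>t. S j + (t/\<tau> - of_int j) * (S (j+1) - S j))"
      using t by (intro continuous_intros) auto
    thus ?thesis by (rule continuous_on_eq) (use pl_piece[OF t] t in auto)
  qed
  have "continuous_on ({of_int (k-1) * \<tau> .. (of_int (k-1) + 1) * \<tau>} \<union> {of_int k * \<tau> .. (of_int k + 1) * \<tau>}) (pl S \<tau>)"
    by (intro continuous_on_closed_Un piece) auto
  moreover have "x \<in> interior ({of_int (k-1) * \<tau> .. (of_int (k-1) + 1) * \<tau>} \<union> {of_int k * \<tau> .. (of_int k + 1) * \<tau>})"
  proof -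
    have s1: "{of_int (k-1) * \<tau> <..< (of_int k + 1) * \<tau>} \<subseteq> {of_int (k-1) * \<tau> .. (of_int (k-1) + 1) * \<tau>} \<union> {of_int k * \<tau> .. (of_int k + 1) * \<tau>}"
      by (auto simp: algebra_simps)
    have s2: "x \<in> {of_int (k-1) * \<tau> <..< (of_int k + 1) * \<tau>}" using kl ku t by (auto simp: algebra_simps)
    show ?thesis using interior_maximal[OF s1 open_greaterThanLessThan] s2 by blast
  qed
  ultimately show "isCont (pl S \<tau>) x" by (rule continuous_on_interior)
qed

lemma mono_int_seq: fixes S :: "int \<Rightarrow> real" assumes "\<And>k. S k < S (k+1)" shows "j \<le> k \<Longrightarrow> (S j :: real) \<le> S k"
proof -
  have "S j \<le> S (j + int n)" for n
  proof (induction n)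
    case (Suc n)
    have e: "j + int (Suc n) = (j + int n) + 1" by simp
    show ?case unfolding e using Suc assms[of "j + int n"] by linarith
  qed simp
  moreover assume "j \<le> k"
  ultimately show ?thesis by (metis le_add_diff_inverse nonneg_int_cases diff_ge_0_iff_ge)
qed

lemma pl_smono: assumes t: "\<tau> > 0" and inc: "\<And>k. S k < S (k+1)" shows "strict_mono (pl S \<tau>)"
proof (rule strict_monoI)
  fix a b :: real assume ab: "a < b"
  define ka where "ka = \<lfloor>a/\<tau>\<rfloor>"
  define kb where "kb = \<lfloor>b/\<tau>\<rfloor>"
  have la: "of_int ka * \<tau> \<le> a" "a < (of_int ka + 1) * \<tau>"
    using floor_divide_lower[OF t] floor_divide_upper[OF t] ka_def by auto
  have lb: "of_int kb * \<tau> \<le> b" "b < (of_int kb + 1) * \<tau>"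
    using floor_divide_lower[OF t] floor_divide_upper[OF t] kb_def by auto
  have pa: "pl S \<tau> a = S ka + (a/\<tau> - of_int ka) * (S (ka+1) - S ka)" using pl_piece[OF t la(1)] la(2) by simp
  have pb: "pl S \<tau> b = S kb + (b/\<tau> - of_int kb) * (S (kb+1) - S kb)" using pl_piece[OF t lb(1)] lb(2) by simp
  have fa: "0 \<le> a/\<tau> - of_int ka" "a/\<tau> - of_int ka < 1" using la t by (auto simp: field_simps)
  have fb: "0 \<le> b/\<tau> - of_int kb" "b/\<tau> - of_int kb < 1" using lb t by (auto simp: field_simps)
  have kab: "ka \<le> kb" unfolding ka_def kb_def using ab t by (intro floor_mono) (simp add: divide_right_mono)
  show "pl S \<tau> a < pl S \<tau> b"
  proof (cases "ka = kb")
    case True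
    have "a/\<tau> < b/\<tau>" using ab t by (simp add: divide_strict_right_mono)
    thus ?thesis using True pa pb inc[of kb] by (simp add: mult_strict_right_mono)
  next
    case False
    hence "ka + 1 \<le> kb" using kab by simp
    hence m: "S (ka+1) \<le> S kb" by (rule mono_int_seq[of S, OF inc])
    have "pl S \<tau> a < S ka + 1 * (S (ka+1) - S ka)" unfolding pa
      using fa inc[of ka] by (intro add_strict_left_mono mult_strict_right_mono) auto
    also have "\<dots> \<le> S kb" using m by simp
    also have "S kb \<le> pl S \<tau> b" unfolding pb using fb inc[of kb] by simp
    finally show ?thesis .
  qed
qed

lemma pl_surj: assumes t: "\<tau> > 0" and c: "c > 0" and inc: "\<And>k. S (k+1) - S k \<ge> c"
  shows "surj (pl S \<tau>)"
proof -
  have up: "S (int n) \<ge> S 0 + c * real n" for n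
  proof (induction n)
    case (Suc n) thus ?case using inc[of "int n"] by (simp add: algebra_simps)
  qed simp
  have dn: "S (- int n) \<le> S 0 - c * real n" for n
  proof (induction n)
    case (Suc n) thus ?case using inc[of "- int (Suc n)"] by (simp add: algebra_simps)
  qed simp
  have "v \<in> range (pl S \<tau>)" for v
  proof -
    obtain n :: nat where n: "\<bar>v - S 0\<bar> / c < real n" using reals_Archimedean2 by blast
    hence n': "\<bar>v - S 0\<bar> < c * real n" using c by (simp add: field_simps)
    have a: "pl S \<tau> (of_int (- int n) * \<tau>) \<le> v" using pl_at[OF t] dn[of n] n' by (smt (verit))
    have b: "v \<le> pl S \<tau> (of_int (int n) * \<tau>)" using pl_at[OF t] up[of n] n' by (smt (verit))
    have "of_int (- int n) * \<tau> \<le> of_int (int n) * \<tau>" using t by simp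
    from IVT'[OF a b this continuous_on_subset[OF pl_cont[OF t]]] show ?thesis by auto
  qed
  thus ?thesis by auto
qed

lemma pl_homeo: assumes t: "\<tau> > 0" and c: "c > 0" and inc: "\<And>k. S (k+1) - S k \<ge> c"
  shows "increasing_homeomorphism (pl S \<tau>)"
proof -
  let ?f = "pl S \<tau>"
  have inc': "S k < S (k+1)" for k using inc[of k] c by linarith
  have sm: "strict_mono ?f" using pl_smono[of \<tau> S, OF t inc'] .
  have su: "surj ?f" by (rule pl_surj[of \<tau> c S, OF t c inc])
  have inj: "inj ?f" using sm strict_mono_imp_inj_on by blast
  have cf: "continuous_on UNIV ?f" by (rule pl_cont[OF t])
  have cfa: "isCont ?f z" for z using cf continuous_on_eq_continuous_at[OF open_UNIV] by blast
  have gi: "inv ?f (?f z) = z" for z using inj by simp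
  have fg: "?f (inv ?f y) = y" for y using su by (simp add: surj_f_inv_f)
  have cg: "continuous_on UNIV (inv ?f)"
  proof (intro continuous_at_imp_continuous_on ballI)
    fix y :: real
    have "isCont (inv ?f) (?f (inv ?f y))"
      by (rule isCont_inverse_function[where d=1 and f="pl S \<tau>" and g="inv (pl S \<tau>)" and x="inv (pl S \<tau>) y"]) (use gi cfa in auto)
    thus "isCont (inv ?f) y" using fg by simp
  qed
  have "homeomorphism UNIV UNIV ?f (inv ?f)"
    by (rule homeomorphismI) (use cf cg gi fg in auto)
  thus ?thesis unfolding increasing_homeomorphism_def using sm strict_mono_mono by blast
qed




lemma part2:
  fixes \<phi> :: "real \<Rightarrow> 'a::metric_space \<Rightarrow> 'a"
  assumes cpt: "compact (UNIV :: 'a set)" and fl: "is_flow \<phi>"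
    and se: "singular_expansive \<phi>" and op: "open (Sing \<phi>)"
  shows "expansive_on \<phi> (UNIV - Sing \<phi>)"
  unfolding expansive_on_def
proof (intro allI impI)
  fix \<epsilon> :: real assume \<epsilon>: "\<epsilon> > 0"
  show "\<exists>\<delta>>0. \<forall>x\<in>UNIV - Sing \<phi>. \<forall>y\<in>UNIV - Sing \<phi>. \<forall>s :: real \<Rightarrow> real.
     continuous_on UNIV s \<and> s 0 = 0 \<and> (\<forall>t. dist (\<phi> t x) (\<phi> (s t) y) \<le> \<delta>)
       \<longrightarrow> (\<exists>u\<in>{-\<epsilon>..\<epsilon>}. y = \<phi> u x)"
  proof (cases "- Sing \<phi> = {}")
    case True thus ?thesis by (intro exI[of _ 1]) auto
  next
    case ne: False
    obtain m where m: "m > 0" "\<forall>z. z \<notin> Sing \<phi> \<longrightarrow> m \<le> setdist_pt z (Sing \<phi>)"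
      using flow_m[OF cpt fl op ne] by blast
    obtain b2 where b2: "b2 > 0" "b2 \<le> \<epsilon>" "\<forall>w. w \<notin> Sing \<phi> \<longrightarrow> \<phi> b2 w \<noteq> w"
      using flow_no_period[OF cpt fl op \<epsilon>] by blast
    obtain \<eta>2 where \<eta>2: "\<eta>2 > 0" "\<forall>w. w \<notin> Sing \<phi> \<longrightarrow> \<eta>2 \<le> dist w (\<phi> b2 w) \<and> \<eta>2 \<le> dist w (\<phi> (-b2) w)"
      using flow_eta[OF cpt fl op b2(3)] by blast
    have hb: "b2/2 > 0" using b2 by simp
    from se[unfolded singular_expansive_def, rule_format, OF hb]
    obtain \<delta>' where \<delta>': "\<delta>' > 0" and
      SE0: "\<forall>x y. \<forall>s :: real \<Rightarrow> real. increasing_homeomorphism s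
     \<and> (\<forall>t. dist (\<phi> t x) (\<phi> (s t) y) \<le> \<delta>' * setdist_pt (\<phi> t x) (Sing \<phi>))
       \<longrightarrow> (\<exists>t0. \<exists>u\<in>{t0-b2/2..t0+b2/2}. \<phi> (s t0) y = \<phi> u x)"
      by (elim exE conjE)
    have SE: "\<And>x y s. increasing_homeomorphism s \<Longrightarrow>
       (\<And>t. dist (\<phi> t x) (\<phi> (s t) y) \<le> \<delta>' * setdist_pt (\<phi> t x) (Sing \<phi>)) \<Longrightarrow>
       (\<exists>t0. \<exists>u\<in>{t0-b2/2..t0+b2/2}. \<phi> (s t0) y = \<phi> u x)"
      using SE0 by blast
    define \<beta> where "\<beta> = min \<eta>2 (\<delta>' * m) / 2"
    have \<beta>: "\<beta> > 0" using \<eta>2 \<delta>' m unfolding \<beta>_def by simp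
    obtain \<rho> where \<rho>: "\<rho> > 0" and
      R0: "\<forall>r1 r2 a b. r1 \<in> {-1..1} \<longrightarrow> r2 \<in> {-1..1} \<longrightarrow> \<bar>r1 - r2\<bar> < \<rho> \<longrightarrow> dist a b < \<rho>
          \<longrightarrow> dist (\<phi> r1 a) (\<phi> r2 b) < \<beta>"
      using flow_uc[OF cpt fl \<beta>, of 1] by (elim exE conjE)
    define \<rho>' where "\<rho>' = min \<rho> 1"
    have \<rho>': "\<rho>' > 0" using \<rho> unfolding \<rho>'_def by simp
    have R: "dist (\<phi> e w) w < \<beta>" if "\<bar>e\<bar> < \<rho>'" for e w
      using R0[rule_format, of e 0 w w] that \<rho> unfolding \<rho>'_def using fl by (auto simp: abs_less_iff)
    have hr: "\<rho>'/2 > 0" using \<rho>' by simp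
    obtain \<epsilon>1 where e1: "\<epsilon>1 > 0" "\<epsilon>1 \<le> \<rho>'/2" "\<forall>w. w \<notin> Sing \<phi> \<longrightarrow> \<phi> \<epsilon>1 w \<noteq> w"
      using flow_no_period[OF cpt fl op hr] by blast
    obtain \<eta>1 where \<eta>1: "\<eta>1 > 0" "\<forall>w. w \<notin> Sing \<phi> \<longrightarrow> \<eta>1 \<le> dist w (\<phi> \<epsilon>1 w) \<and> \<eta>1 \<le> dist w (\<phi> (-\<epsilon>1) w)"
      using flow_eta[OF cpt fl op e1(3)] by blast
    define \<tau> where "\<tau> = 3 * \<epsilon>1"
    have \<tau>: "\<tau> > 0" using e1 unfolding \<tau>_def by simp
    have h\<eta>1: "\<eta>1/2 > 0" using \<eta>1 by simp
    obtain \<zeta> where \<zeta>: "\<zeta> > 0" and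
      Z0: "\<forall>r1 r2 a b. r1 \<in> {-\<tau>..\<tau>} \<longrightarrow> r2 \<in> {-\<tau>..\<tau>} \<longrightarrow> \<bar>r1 - r2\<bar> < \<zeta> \<longrightarrow> dist a b < \<zeta>
          \<longrightarrow> dist (\<phi> r1 a) (\<phi> r2 b) < \<eta>1/2"
      using flow_uc[OF cpt fl h\<eta>1, of \<tau>] by (elim exE conjE)
    have Z: "dist (\<phi> r a) (\<phi> r b) < \<eta>1/2" if "r \<in> {0..\<tau>}" "dist a b < \<zeta>" for r a b
      using Z0[rule_format, of r r a b] that \<zeta> by auto
    define \<delta> where "\<delta> = min \<beta> (min \<zeta> (\<eta>1/2)) / 2"
    have \<delta>: "\<delta> > 0" "\<delta> \<le> \<beta>/2" "\<delta> < \<zeta>" "\<delta> < \<eta>1/2"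
      using \<beta> \<zeta> \<eta>1 unfolding \<delta>_def by auto
    show ?thesis
    proof (rule exI[of _ \<delta>], intro conjI \<delta>(1) ballI allI impI, elim conjE)
      fix x y and s :: "real \<Rightarrow> real"
      assume xS: "x \<in> UNIV - Sing \<phi>" and yS: "y \<in> UNIV - Sing \<phi>"
        and cs: "continuous_on UNIV s" and s0: "s 0 = 0"
        and tr: "\<forall>t. dist (\<phi> t x) (\<phi> (s t) y) \<le> \<delta>"
      have xS': "x \<notin> Sing \<phi>" and yS': "y \<notin> Sing \<phi>" using xS yS by auto
      have cst: "continuous_on UNIV (\<lambda>r. s (t + r))" for t
      proof -
        have "continuous_on UNIV (s \<circ> (\<lambda>r. t + r))"
          by (rule continuous_on_compose) (auto intro!: continuous_intros continuous_on_subset[OF cs])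
        thus ?thesis by (simp add: o_def)
      qed
      have loc: "\<bar>s (t + r) - s t - r\<bar> < \<epsilon>1" if r: "r \<in> {0..\<tau>}" for t r
      proof -
        define w0 where "w0 = \<phi> (s t) y"
        have w0S: "w0 \<notin> Sing \<phi>" using yS' Sing_inv[OF fl] unfolding w0_def by blast
        let ?h = "\<lambda>r. s (t + r) - s t - r"
        have ch: "continuous_on {0..r} ?h"
          by (intro continuous_intros continuous_on_subset[OF cst]) auto
        have trk: "\<forall>r'\<in>{0..r}. dist (\<phi> r' w0) (\<phi> (r' + ?h r') w0) < \<eta>1"
        proof
          fix r' assume r': "r' \<in> {0..r}"
          have e: "\<phi> (r' + ?h r') w0 = \<phi> (s (t + r')) y"
            unfolding w0_def using flow_comp[OF fl] by simp
          have "dist (\<phi> r' w0) (\<phi> (s (t + r')) y)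
              \<le> dist (\<phi> r' w0) (\<phi> r' (\<phi> t x)) + dist (\<phi> r' (\<phi> t x)) (\<phi> (s (t + r')) y)"
            by (rule dist_triangle)
          also have "dist (\<phi> r' w0) (\<phi> r' (\<phi> t x)) < \<eta>1/2"
          proof (rule Z)
            show "r' \<in> {0..\<tau>}" using r r' by auto
            show "dist w0 (\<phi> t x) < \<zeta>" using tr[rule_format, of t] \<delta> unfolding w0_def
              by (simp add: dist_commute)
          qed
          also have "dist (\<phi> r' (\<phi> t x)) (\<phi> (s (t + r')) y) \<le> \<delta>"
            using tr[rule_format, of "t + r'"] flow_comp[OF fl] by (simp add: add.commute)
          finally show "dist (\<phi> r' w0) (\<phi> (r' + ?h r') w0) < \<eta>1" using e \<delta> by simp
        qed
        have "\<bar>?h r\<bar> < \<epsilon>1"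
          by (rule barrier_fwd(1)[OF fl e1(1) \<eta>1(2) w0S _ ch trk]) (use r e1 in auto)
        thus ?thesis .
      qed
      define S where "S k = s (of_int k * \<tau>)" for k :: int
      have incS: "\<bar>S (k+1) - S k - \<tau>\<bar> < \<epsilon>1" for k
      proof -
        have "of_int (k+1) * \<tau> = of_int k * \<tau> + \<tau>" by (simp add: algebra_simps)
        thus ?thesis using loc[of \<tau> "of_int k * \<tau>"] \<tau> unfolding S_def by simp
      qed
      have incS2: "S (k+1) - S k \<ge> 2 * \<epsilon>1" for k using incS[of k] unfolding \<tau>_def by linarith
      define st where "st = pl S \<tau>"
      have ih: "increasing_homeomorphism st" unfolding st_def
        by (rule pl_homeo[of \<tau> "2*\<epsilon>1" S, OF \<tau> _ incS2]) (use e1 in simp)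
      have cst2: "continuous_on UNIV st" using ih unfolding increasing_homeomorphism_def homeomorphism_def by auto
      have st0: "st 0 = 0" using pl_at[OF \<tau>, of S 0] s0 unfolding st_def S_def by simp
      have close: "\<bar>st t - s t\<bar> < 2 * \<epsilon>1" for t
      proof -
        define k where "k = \<lfloor>t/\<tau>\<rfloor>"
        have kl: "of_int k * \<tau> \<le> t" using floor_divide_lower[OF \<tau>] k_def by simp
        have ku: "t < (of_int k + 1) * \<tau>" using floor_divide_upper[OF \<tau>] k_def by simp
        define r where "r = t - of_int k * \<tau>"
        define l where "l = t/\<tau> - of_int k"
        have r: "r \<in> {0..\<tau>}" using kl ku unfolding r_def by (auto simp: algebra_simps)
        have lr: "l * \<tau> = r" unfolding l_def r_def using \<tau> by (simp add: field_simps)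
        have lrt: "l = r/\<tau>" using lr \<tau> by (auto simp: field_simps)
        have l01: "0 \<le> l" "l \<le> 1" using r \<tau> unfolding lrt by (auto simp: divide_le_eq_1)
        have pe: "st t = S k + l * (S (k+1) - S k)" unfolding st_def l_def
          using pl_piece[OF \<tau> kl] ku by simp
        have a1: "\<bar>s t - S k - r\<bar> < \<epsilon>1" using loc[OF r, of "of_int k * \<tau>"] unfolding S_def r_def by simp
        have eq: "st t - S k - r = l * (S (k+1) - S k - \<tau>)" using pe lr by (simp add: algebra_simps)
        have "\<bar>l * (S (k+1) - S k - \<tau>)\<bar> \<le> \<bar>S (k+1) - S k - \<tau>\<bar>"
          using l01 by (simp add: abs_mult mult_left_le_one_le)
        hence "\<bar>st t - S k - r\<bar> < \<epsilon>1" using eq incS[of k] by linarith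
        thus ?thesis using a1 by linarith
      qed
      have trs: "dist (\<phi> t x) (\<phi> (st t) y) < 2 * \<beta>" for t
      proof -
        have e: "\<phi> (st t) y = \<phi> (st t - s t) (\<phi> (s t) y)" using flow_comp[OF fl] by simp
        have "\<bar>st t - s t\<bar> < \<rho>'" using close[of t] e1 by linarith
        hence "dist (\<phi> (st t) y) (\<phi> (s t) y) < \<beta>" using R e by simp
        moreover have "dist (\<phi> t x) (\<phi> (s t) y) \<le> \<delta>" using tr by simp
        ultimately show ?thesis using dist_triangle[of "\<phi> t x" "\<phi> (st t) y" "\<phi> (s t) y"] \<delta>
          by (simp add: dist_commute)
      qed
      have b2b: "2 * \<beta> \<le> \<eta>2" "2 * \<beta> \<le> \<delta>' * m" unfolding \<beta>_def by auto
      have "\<exists>t0. \<exists>u\<in>{t0-b2/2..t0+b2/2}. \<phi> (st t0) y = \<phi> u x"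
      proof (rule SE[OF ih])
        fix t
        have "\<phi> t x \<notin> Sing \<phi>" using xS' Sing_inv[OF fl] by blast
        hence "m \<le> setdist_pt (\<phi> t x) (Sing \<phi>)" using m by blast
        hence "\<delta>' * m \<le> \<delta>' * setdist_pt (\<phi> t x) (Sing \<phi>)" using \<delta>' by simp
        thus "dist (\<phi> t x) (\<phi> (st t) y) \<le> \<delta>' * setdist_pt (\<phi> t x) (Sing \<phi>)"
          using trs[of t] b2b by linarith
      qed
      then obtain t0 u where u: "u \<in> {t0-b2/2..t0+b2/2}" and eu: "\<phi> (st t0) y = \<phi> u x" by blast
      have yeq: "y = \<phi> (u - st t0) x"
      proof -
        have "y = \<phi> (- st t0) (\<phi> (st t0) y)" using flow_comp[OF fl] fl by simp
        thus ?thesis using eu flow_comp[OF fl] by simp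
      qed
      define h where "h t = st t + u - st t0 - t" for t
      have ch: "continuous_on A h" for A unfolding h_def
        by (intro continuous_intros continuous_on_subset[OF cst2]) auto
      have trk: "\<forall>t\<in>A. dist (\<phi> t x) (\<phi> (t + h t) x) < \<eta>2" for A
      proof
        fix t
        have "\<phi> (t + h t) x = \<phi> (st t) y"
          unfolding h_def using yeq flow_comp[OF fl] by (simp add: algebra_simps)
        thus "dist (\<phi> t x) (\<phi> (t + h t) x) < \<eta>2" using trs[of t] b2b by simp
      qed
      have ht0: "\<bar>h t0\<bar> < b2" using u b2 unfolding h_def by auto
      have h0: "\<bar>h 0\<bar> < b2"
      proof (cases "0 \<le> t0")
        case True
        show ?thesis by (rule barrier_fwd(2)[OF fl b2(1) \<eta>2(2) xS' True ch trk ht0])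
      next
        case False
        show ?thesis by (rule barrier_fwd(1)[OF fl b2(1) \<eta>2(2) xS' _ ch trk ht0]) (use False in simp)
      qed
      have "h 0 = u - st t0" unfolding h_def using st0 by simp
      hence "y = \<phi> (h 0) x" using yeq by simp
      moreover have "h 0 \<in> {-\<epsilon>..\<epsilon>}" using h0 b2 by auto
      ultimately show "\<exists>u\<in>{-\<epsilon>..\<epsilon>}. y = \<phi> u x" by blast
    qed
  qed
qed


theorem mainTheorem14:
  fixes \<phi> :: "real \<Rightarrow> 'a::metric_space \<Rightarrow> 'a"
  assumes "compact (UNIV :: 'a set)"
    and "is_flow \<phi>"
  shows "(expansive_on \<phi> (UNIV - Sing \<phi>) \<longrightarrow> singular_expansive \<phi>)
     \<and> (singular_expansive \<phi> \<and> open (Sing \<phi>) \<longrightarrow> expansive_on \<phi> (UNIV - Sing \<phi>))"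
  using part1[OF assms] part2[OF assms] by blast

end
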